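(* Let $l\ge0$ be an integer and $r$ a real number with $\frac{l}{2l+1}<r<\frac12$, and put $\delta=r-\frac{l}{2l+1}$. If $X\subseteq S^1$ is a finite subset with $\mathrm{wf}_{<}(X;r)>\frac{l}{2l+1}$, then $X$ is an $\big((l+\frac12)\delta\big)$-covering of $S^1$.
   Context: $S^1$ is the circle of circumference $1$ with arc-length metric; $\vec d(x,y)$ is the clockwise distance from $x$ to $y$. $X$ is an $\varepsilon$-covering of $S^1$ if every point of $S^1$ is at distance less than $\varepsilon$ from some point of $X$. For finite $X$ and $0<r<\frac12$, $\overrightarrow{\mathbf{VR}}_{<}(X;r)$ is the directed graph on $X$ with $x_1\to x_2$ iff $0<\vec d(x_1,x_2)<r$ (a cyclic graph with the clockwise order), and $\mathrm{wf}_{<}(X;r)=\sup\{k/n:\exists$ cyclic homomorphism $\overrightarrow{C_n^k}\to\overrightarrow{\mathbf{VR}}_{<}(X;r)\}$, where $\overrightarrow{C_n^k}$ ($0\le k<n/2$) has vertices $\{0,\dots,n-1\}$ with $i\to j$ iff $0<(j-i)\bmod n\le k$, and a cyclic homomorphism is a vertex map sending each directed edge to a directed edge or a single vertex, whose fibres are sets of cyclically consecutive vertices, that reflects cyclic betweenness ($f(s)\prec f(s')\prec f(s'')$ implies $s\prec s'\prec s''$), and that is non-constant if the source has a directed cycle. *)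

theory Defs
  imports Complex_Main
begin

text \<open>The circle S^1 of circumference 1 is modelled as the interval [0,1) (reals mod 1).\<close>

definition S1 :: "real set" where
  "S1 = {0..<1}"

definition cw_dist :: "real \<Rightarrow> real \<Rightarrow> real" where
  "cw_dist x y = frac (y - x)"

definition arc_dist :: "real \<Rightarrow> real \<Rightarrow> real" where
  "arc_dist x y = min (cw_dist x y) (cw_dist y x)"

definition is_covering :: "real set \<Rightarrow> real \<Rightarrow> bool" where
  "is_covering X \<epsilon> \<longleftrightarrow> (\<forall>p\<in>S1. \<exists>x\<in>X. arc_dist p x < \<epsilon>)"

definition vr_edge :: "real \<Rightarrow> real \<Rightarrow> real \<Rightarrow> bool" where
  "vr_edge r x y \<longleftrightarrow> 0 < cw_dist x y \<and> cw_dist x y < r"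

definition between_S1 :: "real \<Rightarrow> real \<Rightarrow> real \<Rightarrow> bool" where
  "between_S1 x y z \<longleftrightarrow> 0 < cw_dist x y \<and> cw_dist x y < cw_dist x z"

definition cw_dist_n :: "nat \<Rightarrow> nat \<Rightarrow> nat \<Rightarrow> nat" where
  "cw_dist_n n i j = (j + n - i) mod n"

definition Cnk_edge :: "nat \<Rightarrow> nat \<Rightarrow> nat \<Rightarrow> nat \<Rightarrow> bool" where
  "Cnk_edge n k i j \<longleftrightarrow> 0 < cw_dist_n n i j \<and> cw_dist_n n i j \<le> k"

definition between_n :: "nat \<Rightarrow> nat \<Rightarrow> nat \<Rightarrow> nat \<Rightarrow> bool" where
  "between_n n s s' s'' \<longleftrightarrow> 0 < cw_dist_n n s s' \<and> cw_dist_n n s s' < cw_dist_n n s s''"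

definition cyc_consecutive :: "nat \<Rightarrow> nat set \<Rightarrow> bool" where
  "cyc_consecutive n A \<longleftrightarrow> (\<exists>a m. A = {(a + i) mod n | i. i < m})"

text \<open>Cyclic homomorphism C_n^k \<rightarrow> VR_<(X;r). C_n^k (with k < n/2) has a directed
  cycle iff k \<ge> 1, so the non-constancy requirement applies exactly when k > 0.\<close>
definition cyclic_hom :: "nat \<Rightarrow> nat \<Rightarrow> real set \<Rightarrow> real \<Rightarrow> (nat \<Rightarrow> real) \<Rightarrow> bool" where
  "cyclic_hom n k X r f \<longleftrightarrow>
     (\<forall>i<n. f i \<in> X) \<and>
     (\<forall>i<n. \<forall>j<n. Cnk_edge n k i j \<longrightarrow> f i = f j \<or> vr_edge r (f i) (f j)) \<and>
     (\<forall>x\<in>X. cyc_consecutive n {i. i < n \<and> f i = x}) \<and>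
     (\<forall>s<n. \<forall>s'<n. \<forall>s''<n. between_S1 (f s) (f s') (f s'') \<longrightarrow> between_n n s s' s'') \<and>
     (0 < k \<longrightarrow> (\<exists>i<n. \<exists>j<n. f i \<noteq> f j))"

definition wf_ratios :: "real set \<Rightarrow> real \<Rightarrow> real set" where
  "wf_ratios X r = {real k / real n | k n. 0 < n \<and> 2 * k < n \<and> (\<exists>f. cyclic_hom n k X r f)}"

text \<open>Winding fraction; convention: 0 if no homomorphism exists (only when X is empty).\<close>
definition wf_lt :: "real set \<Rightarrow> real \<Rightarrow> real" where
  "wf_lt X r = (if wf_ratios X r = {} then 0 else Sup (wf_ratios X r))"

end

theory Submission imports Defs begin

lemma rot_cw: assumes "(p::nat) < n" "j < n" shows "((j + p) mod n + n - p) mod n = j"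
proof (cases "j + p < n")
  case True then show ?thesis using assms by simp
next
  case False
  then have "(j + p) mod n = j + p - n" using assms by (simp add: mod_if)
  then show ?thesis using assms False by simp
qed

lemma rot_cw2: assumes "d < (n::nat)" shows "((x + d) mod n + n - x mod n) mod n = d"
proof -
  have "0 < n" using assms by simp
  have "(x + d) mod n = (d + x mod n) mod n" by (metis add.commute mod_add_right_eq)
  then show ?thesis using rot_cw[of "x mod n" n d] assms \<open>0<n\<close> by simp
qed

lemma arc_contra:
  assumes "0 < (n::nat)" "A = {(a + s) mod n | s. s < M}" "c mod n \<in> A" "(c + j) mod n \<in> A"
    "0 < i" "i < j" "j < n" "(c+i) mod n \<notin> A" "(c + (n-1)) mod n \<notin> A"
  shows False
proof -
  obtain s1 where s1: "s1 < M" "c mod n = (a+s1) mod n" using assms(2,3) by auto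
  obtain s2 where s2: "s2 < M" "(c+j) mod n = (a+s2) mod n" using assms(2,4) by auto
  have sh: "(c + t) mod n = (a + (s1 + t)) mod n" for t
    by (metis s1(2) add.assoc mod_add_left_eq)
  have "\<not> s1 + i < M" using sh[of i] assms(2,8) by auto
  have "s1 = 0"
  proof (rule ccontr)
    assume "s1 \<noteq> 0"
    have "(c + (n-1)) mod n = (a + (s1 - 1) + n) mod n" using sh[of "n-1"] \<open>s1\<noteq>0\<close> assms(1)
      by (metis Nat.add_diff_assoc2 One_nat_def Suc_leI add.assoc add.commute add_diff_assoc
          linorder_not_less not_gr_zero plus_1_eq_Suc)
    also have "\<dots> = (a + (s1 - 1)) mod n" by simp
    finally show False using assms(2,9) s1(1) by auto
  qed
  then have "(a + j) mod n = (a + s2) mod n" using sh[of j] s2(2) by simp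
  moreover have "s2 < i" using \<open>\<not> s1 + i < M\<close> \<open>s1 = 0\<close> s2(1) by simp
  ultimately have "n dvd (a + j) - (a + s2)" using mod_eq_dvd_iff_nat[of "a+s2" "a+j" n] assms(6) by simp
  then have "n dvd j - s2" by simp
  then show False using \<open>s2 < i\<close> assms(6,7)
    using dvd_imp_le[of n "j - s2"] by linarith
qed
lemma crossing:
  fixes G :: "nat \<Rightarrow> real"
  assumes "a < b" "G a \<le> y" "y < G b"
  shows "\<exists>c. a < c \<and> c \<le> b \<and> G (c-1) \<le> y \<and> y < G c"
  using assms
proof (induction b)
  case 0 then show ?case by simp
next
  case (Suc b)
  show ?case
  proof (cases "G b \<le> y")
    case True then show ?thesis using Suc.prems by (intro exI[of _ "Suc b"]) auto
  next
    case False
    then have "a < b" using Suc.prems by (metis less_SucE not_le)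
    then show ?thesis using Suc.IH Suc.prems False by (metis le_SucI not_le)
  qed
qed

lemma exists_lift:
  assumes hom: "cyclic_hom n k X r f" and n2k: "2*k < n" and kpos: "0 < k"
    and XS: "X \<subseteq> S1" and r2: "r < 1/2" and r0: "0 < r"
  shows "\<exists>G::nat\<Rightarrow>real. mono G \<and> (\<forall>i. G (i+n) = G i + 1) \<and> (\<forall>i. G (i+k) - G i < r)
     \<and> (\<forall>i. G (Suc i) - G i < 1) \<and> (\<forall>i. \<exists>x\<in>X. G i - x \<in> \<int>) \<and> 0 \<le> G 0 \<and> G 0 < 1"
proof -
  have fX: "\<And>i. i < n \<Longrightarrow> f i \<in> X" using hom unfolding cyclic_hom_def by blast
  have fedge: "\<And>i j. i < n \<Longrightarrow> j < n \<Longrightarrow> Cnk_edge n k i j \<Longrightarrow> f i = f j \<or> vr_edge r (f i) (f j)"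
    using hom unfolding cyclic_hom_def by blast
  have ffib: "\<And>x. x \<in> X \<Longrightarrow> cyc_consecutive n {i. i < n \<and> f i = x}"
    using hom unfolding cyclic_hom_def by blast
  have fbet: "\<And>s s' s''. s < n \<Longrightarrow> s' < n \<Longrightarrow> s'' < n \<Longrightarrow> between_S1 (f s) (f s') (f s'') \<Longrightarrow> between_n n s s' s''"
    using hom unfolding cyclic_hom_def by blast
  obtain i0 j0 where ij0: "i0 < n" "j0 < n" "f i0 \<noteq> f j0" using hom kpos unfolding cyclic_hom_def by blast
  have n0: "0 < n" using n2k by simp
  have f01: "\<And>i. i < n \<Longrightarrow> 0 \<le> f i \<and> f i < 1" using fX XS unfolding S1_def by (meson atLeastLessThan_iff subsetD)
  define m where "m = Min (f ` {..<n})"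
  have mle: "\<And>i. i < n \<Longrightarrow> m \<le> f i" unfolding m_def by simp
  have min: "m \<in> f ` {..<n}" unfolding m_def using n0 by (intro Min_in) auto
  then obtain t0 where t0: "t0 < n" "f t0 = m" by auto
  have "\<exists>u. u < n \<and> f u \<noteq> m" using ij0 by (cases "f i0 = m") auto
  then obtain u where u: "u < n" "f u \<noteq> m" by blast
  define P where "P s = (f ((u + s) mod n) = m)" for s
  have "(u + (t0 + n - u) mod n) mod n = (u + (t0 + n - u)) mod n" by (simp add: mod_add_right_eq)
  also have "u + (t0 + n - u) = t0 + n" using u by simp
  finally have Pex: "P ((t0 + n - u) mod n)" unfolding P_def using t0 by simp
  define s where "s = (LEAST s. P s)"
  have Ps: "P s" unfolding s_def using Pex by (rule LeastI)
  have s0: "s \<noteq> 0" using Ps u unfolding P_def by (cases s) auto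
  have Ps1: "\<not> P (s - 1)" unfolding s_def using s0 s_def
    by (metis Least_le diff_less less_numeral_extra(1) not_le not_gr_zero)
  define \<rho> where "\<rho> = (u + s) mod n"
  have \<rho>n: "\<rho> < n" unfolding \<rho>_def using n0 by simp
  define g where "g i = f ((i + \<rho>) mod n)" for i
  have gX: "g i \<in> X" for i unfolding g_def using fX n0 by simp
  have g01: "0 \<le> g i \<and> g i < 1" for i unfolding g_def using f01 n0 by simp
  have g0: "g 0 = m" unfolding g_def using Ps \<rho>n unfolding P_def \<rho>_def by simp
  have gm: "m \<le> g i" for i unfolding g_def using mle n0 by simp
  have glast: "g (n-1) \<noteq> m"
  proof -
    have "(n - 1 + \<rho>) mod n = (n - 1 + (u + s)) mod n" unfolding \<rho>_def by (simp add: mod_add_right_eq)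
    also have "n - 1 + (u + s) = (u + (s - 1)) + n" using s0 n0 by simp
    finally have "(n - 1 + \<rho>) mod n = (u + (s - 1)) mod n" by simp
    then show ?thesis using Ps1 unfolding g_def P_def by simp
  qed
  have gmod: "g (i mod n) = g i" for i unfolding g_def by (simp add: mod_add_left_eq)
  have gedge: "g i = g (i+d) \<or> vr_edge r (g i) (g (i+d))" if "1 \<le> d" "d \<le> k" for i d
  proof -
    have "d < n" using that n2k by simp
    have "cw_dist_n n ((i + \<rho>) mod n) ((i + d + \<rho>) mod n) = d"
      unfolding cw_dist_n_def using rot_cw2[OF \<open>d < n\<close>, of "i + \<rho>"] by (simp add: add.commute add.left_commute)
    then have "Cnk_edge n k ((i + \<rho>) mod n) ((i + d + \<rho>) mod n)" unfolding Cnk_edge_def using that by simp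
    then show ?thesis unfolding g_def using fedge n0 by simp
  qed
  have gmono: "g i \<le> g j" if "i \<le> j" "j < n" for i j
  proof (rule ccontr)
    assume "\<not> g i \<le> g j"
    then have lt: "g j < g i" by simp
    have "i \<noteq> j" using lt by auto
    with that have ij: "i < j" by simp
    have "i \<noteq> 0" using lt g0 gm[of j] by (cases i) auto
    show False
    proof (cases "g j = m")
      case False
      then have mj: "m < g j" using gm[of j] by simp
      have "between_S1 m (g j) (g i)" unfolding between_S1_def cw_dist_def
        using mj lt g01[of i] g01[of j] gm[of i] gm[of j] g0 g01[of 0] by (simp add: frac_eq)
      then have "between_S1 (f \<rho>) (f ((j + \<rho>) mod n)) (f ((i + \<rho>) mod n))"
        using g0 \<rho>n unfolding g_def by simp
      then have "between_n n \<rho> ((j + \<rho>) mod n) ((i + \<rho>) mod n)" using fbet \<rho>n n0 by simp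
      then have "j < i" unfolding between_n_def cw_dist_n_def
        using rot_cw[OF \<rho>n, of j] rot_cw[OF \<rho>n, of i] that ij by simp
      then show False using ij by simp
    next
      case True
      have "m \<in> X" using g0 gX[of 0] by simp
      then obtain a M where aM: "{i. i < n \<and> f i = m} = {(a + s) mod n | s. s < M}"
        using ffib unfolding cyc_consecutive_def by blast
      show False
      proof (rule arc_contra[OF n0 aM, of \<rho> j i])
        show "\<rho> mod n \<in> {i. i < n \<and> f i = m}" using g0 \<rho>n unfolding g_def by simp
        show "(\<rho> + j) mod n \<in> {i. i < n \<and> f i = m}" using True n0 unfolding g_def by (simp add: add.commute)
        show "(\<rho> + i) mod n \<notin> {i. i < n \<and> f i = m}" using lt True unfolding g_def by (simp add: add.commute)
        show "(\<rho> + (n-1)) mod n \<notin> {i. i < n \<and> f i = m}" using glast unfolding g_def by (simp add: add.commute)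
      qed (use \<open>i \<noteq> 0\<close> ij that in auto)
    qed
  qed
  define G where "G i = g i + real (i div n)" for i
  have GZ: "G i - g i \<in> \<int>" for i unfolding G_def by simp
  have Gper: "G (i + n) = G i + 1" for i
  proof -
    have "g (i + n) = g i" using gmod[of "i+n"] gmod[of i] by simp
    moreover have "(i + n) div n = i div n + 1" using n0 by simp
    ultimately show ?thesis unfolding G_def by simp
  qed
  have Gstep: "G i \<le> G (Suc i) \<and> G (Suc i) - G i < 1" for i
  proof (cases "Suc i mod n = 0")
    case True
    then have im: "i mod n = n - 1" using mod_Suc[of i n] by (auto split: if_splits)
    have "Suc i div n = i div n + 1" using True div_Suc[of i n] by simp
    moreover have "g (Suc i) = g 0" using gmod[of "Suc i"] True by simp
    moreover have "g i = g (n-1)" using gmod[of i] im by simp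
    moreover have "g 0 < g (n-1)" using glast g0 gm[of "n-1"] by simp
    ultimately show ?thesis unfolding G_def using g01[of "n-1"] g01[of 0] by simp
  next
    case False
    then have im: "Suc i mod n = Suc (i mod n)" using mod_Suc[of i n] by (auto split: if_splits)
    have "Suc i div n = i div n" using False div_Suc[of i n] by simp
    moreover have "g (Suc i) = g (Suc (i mod n))" using gmod[of "Suc i"] im by simp
    moreover have "g (i mod n) \<le> g (Suc (i mod n))" using gmono[of "i mod n" "Suc (i mod n)"] im mod_less_divisor[OF n0, of "Suc i"] by simp
    moreover have "g (i mod n) = g i" by (rule gmod)
    ultimately show ?thesis unfolding G_def using g01[of "Suc (i mod n)"] g01[of i] by simp
  qed
  have Gmono: "mono G" using Gstep by (intro incseq_SucI) simp
  have Gfrac: "frac (G j - G i) = frac (g j - g i)" for i j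
  proof -
    have "G j - G i = (g j - g i) + (real (j div n) - real (i div n))" unfolding G_def by simp
    moreover have "real (j div n) - real (i div n) \<in> \<int>" by simp
    ultimately show ?thesis using frac_add_int_right[of "real (j div n) - real (i div n)" "g j - g i"] by simp
  qed
  have Gedge: "G (i+d) - G i < r" if "1 \<le> d" "d \<le> k" "G (i+d) - G i < 1" for i d
  proof -
    have x0: "0 \<le> G (i+d) - G i" using Gmono by (simp add: mono_def)
    then have fx: "frac (G (i+d) - G i) = G (i+d) - G i" using that(3) by (simp add: frac_eq)
    from gedge[OF that(1,2), of i] show ?thesis
    proof
      assume "g i = g (i + d)"
      then have "frac (G (i+d) - G i) = 0" using Gfrac[of "i+d" i] by simp
      then show ?thesis using fx r0 by simp
    next
      assume "vr_edge r (g i) (g (i + d))"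
      then have "frac (g (i+d) - g i) < r" unfolding vr_edge_def cw_dist_def by simp
      then show ?thesis using fx Gfrac[of "i+d" i] by simp
    qed
  qed
  have Gk: "G (i+k) - G i < r" for i
  proof (cases "G (i+k) - G i < 1")
    case True then show ?thesis using Gedge[of k i] kpos by simp
  next
    case False
    have "G (i+k) \<le> G (i+n)" using Gmono n2k by (simp add: mono_def)
    then have eq: "G (i+k) = G i + 1" using False Gper[of i] by simp
    obtain c where c: "i < c" "c \<le> i+k" "G (c-1) \<le> G i" "G i < G c"
      using crossing[of i "i+k" G "G i"] kpos eq by auto
    have "G i \<le> G (c-1)" using Gmono c(1) by (simp add: mono_def)
    then have c1: "G (c-1) = G i" using c(3) by simp
    have "G (i+k) \<le> G (c+k)" "G (c+k) \<le> G (i+n)" using Gmono c(1,2) n2k by (simp_all add: mono_def)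
    then have "G (c+k) = G i + 1" using eq Gper[of i] by simp
    then have "G (c+k) - G c < 1" using c(4) by simp
    then have "G (c+k) - G c < r" using Gedge[of k c] kpos by simp
    then have A: "G c - G (c-1) > 1 - r" using c1 \<open>G (c+k) = G i + 1\<close> by simp
    have cc: "c - 1 + 1 = c" using c(1) by simp
    have "G c - G (c-1) < 1" using Gstep[of "c-1"] c(1) by (simp add: Suc_pred')
    then have "G (c - 1 + 1) - G (c-1) < r" using Gedge[of 1 "c-1"] kpos cc by simp
    then show ?thesis using A cc r2 by simp
  qed
  show ?thesis
  proof (intro exI[of _ G] conjI allI)
    show "mono G" by (rule Gmono)
    show "G (i + n) = G i + 1" for i by (rule Gper)
    show "G (i + k) - G i < r" for i by (rule Gk)
    show "G (Suc i) - G i < 1" for i using Gstep by simp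
    show "\<exists>x\<in>X. G i - x \<in> \<int>" for i using gX GZ by blast
    show "0 \<le> G 0" "G 0 < 1" using g01[of 0] unfolding G_def by simp_all
  qed
qed

theorem proposition5p4:
  fixes l :: nat and r :: real and X :: "real set"
  assumes "real l / (2 * real l + 1) < r" and "r < 1/2"
    and "finite X" and "X \<subseteq> S1"
    and "wf_lt X r > real l / (2 * real l + 1)"
  shows "is_covering X ((real l + 1/2) * (r - real l / (2 * real l + 1)))"
proof -
  define c where "c = real l / (2 * real l + 1)"
  define \<epsilon> where "\<epsilon> = (real l + 1/2) * (r - c)"
  have c0: "0 \<le> c" unfolding c_def by simp
  have r0: "0 < r" using assms(1) c0 unfolding c_def by linarith
  have e2: "2 * \<epsilon> = (2 * real l + 1) * r - real l"
    unfolding \<epsilon>_def c_def by (simp add: field_simps)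
  have ne: "wf_ratios X r \<noteq> {}"
  proof
    assume "wf_ratios X r = {}"
    then have "wf_lt X r = 0" unfolding wf_lt_def by simp
    then show False using assms(5) c0 unfolding c_def by simp
  qed
  then have "c < Sup (wf_ratios X r)" using assms(5) unfolding wf_lt_def c_def by simp
  then obtain y where "y \<in> wf_ratios X r" "c < y" using less_cSupD[OF ne] by blast
  then obtain k n f where kn: "y = real k / real n" "0 < n" "2 * k < n" "cyclic_hom n k X r f"
    "c < real k / real n"
    unfolding wf_ratios_def by blast
  have kpos: "0 < k" using kn(5) c0 by (cases k) auto
  have "real l * real n < real k * (2 * real l + 1)"
    using kn(5) kn(2) unfolding c_def by (simp add: field_simps)
  then have "real (l * n) < real (k * (2 * l + 1))" by (simp add: algebra_simps)
  then have "l * n < k * (2 * l + 1)" by (simp only: of_nat_less_iff)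
  then have ineq: "Suc (l * n) \<le> (2 * l + 1) * k" by (simp add: mult.commute)
  obtain G :: "nat \<Rightarrow> real" where G: "mono G" "\<And>i. G (i+n) = G i + 1" "\<And>i. G (i+k) - G i < r"
    "\<And>i. G (Suc i) - G i < 1" "\<And>i. \<exists>x\<in>X. G i - x \<in> \<int>" "0 \<le> G 0" "G 0 < 1"
    using exists_lift[OF kn(4) kn(3) kpos assms(4) assms(2) r0] by blast
  have Gpern: "G (i + j * n) = G i + real j" for i j
  proof (induction j)
    case 0 then show ?case by simp
  next
    case (Suc j)
    have "G (i + Suc j * n) = G ((i + j * n) + n)" by (simp add: algebra_simps)
    then show ?case using Suc G(2) by simp
  qed
  have tele: "G (v + j * k) - G v \<le> real j * r" for v j
  proof (induction j)
    case 0 then show ?case by simp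
  next
    case (Suc j)
    have "G (v + Suc j * k) = G ((v + j * k) + k)" by (simp add: algebra_simps)
    then show ?case using Suc G(3)[of "v + j * k"] by (simp add: algebra_simps)
  qed
  show ?thesis unfolding is_covering_def \<epsilon>_def[symmetric, unfolded c_def]
  proof
    fix p assume pS: "p \<in> S1"
    show "\<exists>x\<in>X. arc_dist p x < \<epsilon>"
    proof (rule ccontr)
      assume "\<not> (\<exists>x\<in>X. arc_dist p x < \<epsilon>)"
      then have far: "\<And>x. x \<in> X \<Longrightarrow> \<epsilon> \<le> frac (x - p) \<and> \<epsilon> \<le> frac (p - x)"
        unfolding arc_dist_def cw_dist_def by fastforce
      have p01: "0 \<le> p" "p < 1" using pS unfolding S1_def by auto
      have "G (0 + 2 * n) = G 0 + 2" using Gpern[of 0 2] by simp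
      then obtain cc where cc: "0 < cc" "cc \<le> 2 * n" "G (cc - 1) \<le> p + 1" "p + 1 < G cc"
      proof -
        have "G 0 \<le> p + 1" "p + 1 < G (2 * n)" using \<open>G (0 + 2 * n) = G 0 + 2\<close> G(6,7) p01 by simp_all
        then have "\<exists>c. 0 < c \<and> c \<le> 2 * n \<and> G (c-1) \<le> p + 1 \<and> p + 1 < G c"
          using crossing[of 0 "2*n" G "p+1"] kn(2) by simp
        then show ?thesis using that by blast
      qed
      define v where "v = cc - 1"
      have Sv: "Suc v = cc" unfolding v_def using cc(1) by simp
      have lo: "G v \<le> p + 1" "p + 1 < G (Suc v)" using cc Sv unfolding v_def by auto
      have st: "G (Suc v) - G v < 1" by (rule G(4))
      obtain x1 where x1: "x1 \<in> X" "G v - x1 \<in> \<int>" using G(5) by blast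
      obtain x2 where x2: "x2 \<in> X" "G (Suc v) - x2 \<in> \<int>" using G(5) by blast
      have "frac (p + 1 - G v) = frac ((p - x1) + (1 - (G v - x1)))" by (simp add: algebra_simps)
      also have "\<dots> = frac (p - x1)" using x1(2) by (intro frac_add_int_right) simp
      finally have "frac (p + 1 - G v) = frac (p - x1)" .
      moreover have "frac (p + 1 - G v) = p + 1 - G v" using lo st by (simp add: frac_eq)
      ultimately have d1: "\<epsilon> \<le> p + 1 - G v" using far[OF x1(1)] by simp
      have "frac (G (Suc v) - (p + 1)) = frac ((x2 - p) + ((G (Suc v) - x2) - 1))" by (simp add: algebra_simps)
      also have "\<dots> = frac (x2 - p)" using x2(2) by (intro frac_add_int_right) simp
      finally have "frac (G (Suc v) - (p + 1)) = frac (x2 - p)" .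
      moreover have "frac (G (Suc v) - (p + 1)) = G (Suc v) - (p + 1)" using lo st by (simp add: frac_eq)
      ultimately have d2: "\<epsilon> \<le> G (Suc v) - (p + 1)" using far[OF x2(1)] by simp
      have gap: "2 * \<epsilon> \<le> G (Suc v) - G v" using d1 d2 by simp
      have t1: "G (v + (2 * l) * k) - G v \<le> real (2 * l) * r" by (rule tele)
      have t2: "G (v + (2*l) * k + k) - G (v + (2 * l) * k) < r" by (rule G(3))
      have eqv: "v + (2*l) * k + k = v + (2 * l + 1) * k" by (simp add: algebra_simps)
      have "Suc v + l * n \<le> v + (2 * l + 1) * k" using ineq by linarith
      then have "G (Suc v + l * n) \<le> G (v + (2 * l + 1) * k)" by (rule monoD[OF G(1)])
      then have "G (Suc v) + real l \<le> G (v + (2 * l + 1) * k)" using Gpern[of "Suc v" l] by simp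
      then have "G (Suc v) + real l - G v < real (2 * l) * r + r" using t1 t2 eqv by simp
      then have "G (Suc v) - G v < (2 * real l + 1) * r - real l" by (simp add: algebra_simps)
      then show False using gap e2 by simp
    qed
  qed
qed

end
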